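(* Let $S$ be a $\Gamma$-AG$^{**}$-groupoid. Then $S$ is intra-regular if and only if every $\Gamma$-bi-ideal $B$ of $S$ is $\Gamma$-idempotent, i.e. $B\Gamma B=B$.
   Context: Let $S$ and $\Gamma$ be nonempty sets with a map $S\times\Gamma\times S\to S$, $(x,\gamma,y)\mapsto x\gamma y$. $S$ is a $\Gamma$-AG-groupoid if $(x\gamma y)\delta z=(z\gamma y)\delta x$ for all $x,y,z\in S$, $\gamma,\delta\in\Gamma$; it is a $\Gamma$-AG$^{**}$-groupoid if moreover $a\alpha(b\beta c)=b\alpha(a\beta c)$ for all $a,b,c\in S$, $\alpha,\beta\in\Gamma$. For subsets $A,B\subseteq S$, $A\Gamma B=\{a\gamma b: a\in A,\gamma\in\Gamma,b\in B\}$. $S$ is intra-regular if for every $a\in S$ there exist $x,y\in S$ and $\beta,\gamma,\delta\in\Gamma$ with $a=(x\beta(a\delta a))\gamma y$. A nonempty subset $B\subseteq S$ is a $\Gamma$-bi-ideal if $B\Gamma B\subseteq B$ and $(B\Gamma S)\Gamma B\subseteq B$. *)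

theory Defs
  imports Main
begin

text \<open>A Gamma-groupoid: carrier S is the type 'a, Gamma is the type 'g (both nonempty),
  with ternary operation op x g y standing for x g y.\<close>

definition gamma_AG :: "('a \<Rightarrow> 'g \<Rightarrow> 'a \<Rightarrow> 'a) \<Rightarrow> bool" where
  "gamma_AG op \<longleftrightarrow> (\<forall>x y z g d. op (op x g y) d z = op (op z g y) d x)"

definition gamma_AG2 :: "('a \<Rightarrow> 'g \<Rightarrow> 'a \<Rightarrow> 'a) \<Rightarrow> bool" where
  "gamma_AG2 op \<longleftrightarrow> gamma_AG op \<and>
     (\<forall>a b c al be. op a al (op b be c) = op b al (op a be c))"

definition gprod :: "('a \<Rightarrow> 'g \<Rightarrow> 'a \<Rightarrow> 'a) \<Rightarrow> 'a set \<Rightarrow> 'a set \<Rightarrow> 'a set" where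
  "gprod op A B = {op a g b | a g b. a \<in> A \<and> b \<in> B}"

definition intra_regular :: "('a \<Rightarrow> 'g \<Rightarrow> 'a \<Rightarrow> 'a) \<Rightarrow> bool" where
  "intra_regular op \<longleftrightarrow>
     (\<forall>a. \<exists>x y be ga de. a = op (op x be (op a de a)) ga y)"

definition gamma_bi_ideal :: "('a \<Rightarrow> 'g \<Rightarrow> 'a \<Rightarrow> 'a) \<Rightarrow> 'a set \<Rightarrow> bool" where
  "gamma_bi_ideal op B \<longleftrightarrow> B \<noteq> {} \<and> gprod op B B \<subseteq> B \<and>
     gprod op (gprod op B UNIV) B \<subseteq> B"

end

theory Submission
  imports Defs
begin

lemma LI: "gamma_AG2 op \<Longrightarrow> op (op x g y) d z = op (op z g y) d x"
  unfolding gamma_AG2_def gamma_AG_def by blast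

lemma PP: "gamma_AG2 op \<Longrightarrow> op a al (op b be c) = op b al (op a be c)"
  unfolding gamma_AG2_def by blast

lemma MED: "gamma_AG2 op \<Longrightarrow> op (op x g y) d (op z e w) = op (op x g z) d (op y e w)"
proof -
  assume h: "gamma_AG2 op"
  have "op (op x g y) d (op z e w) = op (op (op z e w) g y) d x" using LI[OF h] .
  also have "\<dots> = op (op (op y e w) g z) d x" using LI[OF h, of z e w g y] by simp
  also have "\<dots> = op (op x g z) d (op y e w)" using LI[OF h] by metis
  finally show ?thesis .
qed

lemma PMED: "gamma_AG2 op \<Longrightarrow> op (op x g y) d (op z e w) = op (op w g z) d (op y e x)"
proof -
  assume h: "gamma_AG2 op"
  have "op (op x g y) d (op z e w) = op z d (op (op x g y) e w)" using PP[OF h] .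
  also have "\<dots> = op z d (op (op w g y) e x)" using LI[OF h, of x g y e w] by simp
  also have "\<dots> = op (op w g y) d (op z e x)" using PP[OF h] by metis
  also have "\<dots> = op (op w g z) d (op y e x)" using MED[OF h] .
  finally show ?thesis .
qed

theorem mainTheorem10:
  fixes op :: "'a \<Rightarrow> 'g \<Rightarrow> 'a \<Rightarrow> 'a"
  assumes "gamma_AG2 op"
  shows "intra_regular op \<longleftrightarrow> (\<forall>B. gamma_bi_ideal op B \<longrightarrow> gprod op B B = B)"
proof
  assume ir: "intra_regular op"
  show "\<forall>B. gamma_bi_ideal op B \<longrightarrow> gprod op B B = B"
  proof (intro allI impI)
    fix B assume bi: "gamma_bi_ideal op B"
    have "B \<subseteq> gprod op B B"
    proof
      fix b assume bB: "b \<in> B"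
      obtain x y be ga de where b: "b = op (op x be (op b de b)) ga y"
        using ir unfolding intra_regular_def by blast
      obtain x' y2 be' e1 de' where y: "y = op (op x' be' (op y de' y)) e1 y2"
        using ir unfolding intra_regular_def by blast
      define y1 where "y1 = op x' be' (op y de' y)"
      have y': "y = op y1 e1 y2" using y y1_def by simp
      define z where "z = op (op y2 be y1) e1 x"
      have b2: "b = op (op b de b) ga z"
      proof -
        have "b = op (op x be (op b de b)) ga (op y1 e1 y2)" using b y' by simp
        also have "\<dots> = op (op y2 be y1) ga (op (op b de b) e1 x)" using PMED[OF assms] .
        also have "\<dots> = op (op b de b) ga z" unfolding z_def using PP[OF assms] by metis
        finally show ?thesis .
      qed
      define w where "w = op z ga z"
      have "b = op (op z de b) ga b" using b2 LI[OF assms] by metis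
      also have "op z de b = op (op b de b) de w"
      proof -
        have "op z de b = op z de (op (op b de b) ga z)" using b2 by simp
        also have "\<dots> = op (op b de b) de w" unfolding w_def using PP[OF assms] .
        finally show ?thesis .
      qed
      finally have "b = op (op (op b de b) de w) ga b" .
      also have "\<dots> = op (op b de w) ga (op b de b)" using LI[OF assms] .
      also have "\<dots> = op b ga (op (op b de w) de b)" using PP[OF assms] .
      finally have b3: "b = op b ga (op (op b de w) de b)" .
      have "op b de w \<in> gprod op B UNIV" using bB unfolding gprod_def by blast
      hence "op (op b de w) de b \<in> gprod op (gprod op B UNIV) B" using bB unfolding gprod_def by blast
      hence "op (op b de w) de b \<in> B" using bi unfolding gamma_bi_ideal_def by blast
      thus "b \<in> gprod op B B" using b3 bB unfolding gprod_def by blast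
    qed
    moreover have "gprod op B B \<subseteq> B" using bi unfolding gamma_bi_ideal_def by blast
    ultimately show "gprod op B B = B" by blast
  qed
next
  assume H: "\<forall>B. gamma_bi_ideal op B \<longrightarrow> gprod op B B = B"
  have "gamma_bi_ideal op UNIV" unfolding gamma_bi_ideal_def by auto
  hence SS: "gprod op UNIV UNIV = UNIV" using H by blast
  have surj: "\<exists>v k w. u = op v k w" for u
  proof -
    have "u \<in> gprod op UNIV UNIV" using SS by simp
    thus ?thesis unfolding gprod_def by blast
  qed
  show "intra_regular op" unfolding intra_regular_def
  proof
    fix a
    define L where "L = {op s g a | s g. True}"
    have left: "op u d v \<in> L" if "v \<in> L" for u d v
    proof -
      from that obtain t e where v: "v = op t e a" unfolding L_def by blast
      obtain vv k ww where u: "u = op vv k ww" using surj by blast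
      have "op u d v = op (op a k t) d (op ww e vv)" using u v PMED[OF assms] by simp
      also have "\<dots> = op (op (op ww e vv) k t) d a" using LI[OF assms] .
      finally show ?thesis unfolding L_def by blast
    qed
    have aL: "op u d a \<in> L" for u d unfolding L_def by blast
    have biL: "gamma_bi_ideal op L" unfolding gamma_bi_ideal_def
    proof (intro conjI)
      show "L \<noteq> {}" using aL by blast
      show "gprod op L L \<subseteq> L" unfolding gprod_def using left by blast
      show "gprod op (gprod op L UNIV) L \<subseteq> L" unfolding gprod_def using left by blast
    qed
    define B where "B = insert a L"
    have inB: "op u d v \<in> L" if "v \<in> B" for u d v
      using that left aL unfolding B_def by blast
    have biB: "gamma_bi_ideal op B" unfolding gamma_bi_ideal_def
    proof (intro conjI)
      show "B \<noteq> {}" unfolding B_def by blast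
      show "gprod op B B \<subseteq> B" unfolding gprod_def using inB B_def by blast
      show "gprod op (gprod op B UNIV) B \<subseteq> B" unfolding gprod_def using inB B_def by blast
    qed
    have "a \<in> gprod op B B" using H biB unfolding B_def by blast
    hence "a \<in> L" using inB unfolding gprod_def by blast
    hence "a \<in> gprod op L L" using H biL by blast
    then obtain p d q where pq: "a = op p d q" "p \<in> L" "q \<in> L"
      unfolding gprod_def by blast
    obtain s g where ps: "p = op s g a" using pq(2) unfolding L_def by auto
    obtain t e where qs: "q = op t e a" using pq(3) unfolding L_def by auto
    have a: "a = op (op s g a) d (op t e a)" using pq(1) unfolding ps qs .
    define u where "u = op s g t"
    have a1: "a = op u d (op a e a)" using trans[OF a MED[OF assms, of s g a d t e a]] unfolding u_def .
    have a2: "a = op a d (op u e a)" using trans[OF a1 PP[OF assms, of u d a e a]] .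
    have "a = op (op u d (op a e a)) d (op u e a)"
      using trans[OF a2 arg_cong[where f="\<lambda>z. op z d (op u e a)", OF a1]] .
    thus "\<exists>x y be ga de. a = op (op x be (op a de a)) ga y" by blast
  qed
qed

end
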